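(* Let $(V_1,\dots,V_n)$ be an $n$-tuple of doubly non-commuting isometries on $H$ such that $V_1,\dots,V_n$ are all pure isometries and $\bigcap_{i=1}^n\ker V_i^*$ is finite-dimensional. Let $T\in B(H)$ be such that, for each $i=1,\dots,n$, $TV_i=\tau_iV_iT$ for some $\tau_i\in\mathbb T$ and $T(\ker V_i^* )\subseteq\ker V_i^*$. If the restriction of $T$ to $\bigcap_{i=1}^n\ker V_i^*$ has trivial kernel, then $T(H)=H$.
   Context: Fix $n\ge1$ and $z_{ij}\in\mathbb T$ ($i\ne j$) with $z_{ji}=\overline{z_{ij}}$; $(V_1,\dots,V_n)$ is doubly non-commuting if the $V_i$ are isometries with $V_i^*V_j=\overline{z_{ij}}V_jV_i^*$ for $i\ne j$. An isometry $S$ on $H$ is a pure isometry if $\{0\}$ is the only $S$-invariant subspace of $H$ on which $S$ is unitary. *)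

theory Defs
  imports "HOL-Analysis.Analysis"
begin

text \<open>A complex Hilbert space is then a type of class
cinner_space that is also complete_space.\<close>

class cinner_space = real_normed_vector +
  fixes scaleC :: "complex \<Rightarrow> 'a \<Rightarrow> 'a"
    and cinner :: "'a \<Rightarrow> 'a \<Rightarrow> complex"
  assumes scaleC_of_real: "scaleC (of_real r) x = scaleR r x"
    and scaleC_add_right: "scaleC a (x + y) = scaleC a x + scaleC a y"
    and scaleC_add_left: "scaleC (a + b) x = scaleC a x + scaleC b x"
    and scaleC_scaleC: "scaleC a (scaleC b x) = scaleC (a * b) x"
    and cinner_commute: "cinner x y = cnj (cinner y x)"
    and cinner_add_left: "cinner (x + y) z = cinner x z + cinner y z"
    and cinner_scaleC_left: "cinner (scaleC a x) y = a * cinner x y"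
    and cinner_self_norm: "cinner x x = of_real ((norm x)\<^sup>2)"

definition bounded_clinear :: "('a::cinner_space \<Rightarrow> 'a) \<Rightarrow> bool" where
  "bounded_clinear T \<longleftrightarrow> bounded_linear T \<and> (\<forall>c x. T (scaleC c x) = scaleC c (T x))"

text \<open>The Hilbert space adjoint (it exists and is unique for bounded operators
on a Hilbert space by the Riesz representation theorem).\<close>
definition cadjoint :: "('a::cinner_space \<Rightarrow> 'a) \<Rightarrow> ('a \<Rightarrow> 'a)" where
  "cadjoint T = (SOME S. \<forall>x y. cinner (T x) y = cinner x (S y))"

definition isometry_op :: "('a::cinner_space \<Rightarrow> 'a) \<Rightarrow> bool" where
  "isometry_op V \<longleftrightarrow> bounded_clinear V \<and> (\<forall>x. norm (V x) = norm x)"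

text \<open>Complex linear subspaces (closedness is required separately).\<close>
definition csubspace :: "('a::cinner_space) set \<Rightarrow> bool" where
  "csubspace M \<longleftrightarrow> 0 \<in> M \<and> (\<forall>x\<in>M. \<forall>y\<in>M. x + y \<in> M) \<and> (\<forall>c. \<forall>x\<in>M. scaleC c x \<in> M)"

text \<open>Pure isometry: the zero subspace is the only (closed) invariant subspace on
which S is unitary, i.e. S restricted to M maps M onto M.\<close>
definition pure_isometry :: "('a::cinner_space \<Rightarrow> 'a) \<Rightarrow> bool" where
  "pure_isometry S \<longleftrightarrow> isometry_op S \<and>
     (\<forall>M. csubspace M \<and> closed M \<and> S ` M = M \<longrightarrow> M = {0})"

definition cspan :: "('a::cinner_space) set \<Rightarrow> 'a set" where
  "cspan F = {y. \<exists>c. y = (\<Sum>x\<in>F. scaleC (c x) x)}"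

definition cfinite_dim :: "('a::cinner_space) set \<Rightarrow> bool" where
  "cfinite_dim W \<longleftrightarrow> (\<exists>F. finite F \<and> F \<subseteq> W \<and> W \<subseteq> cspan F)"

definition doubly_noncommuting ::
    "nat \<Rightarrow> (nat \<Rightarrow> nat \<Rightarrow> complex) \<Rightarrow> (nat \<Rightarrow> 'a::cinner_space \<Rightarrow> 'a) \<Rightarrow> bool" where
  "doubly_noncommuting n z V \<longleftrightarrow>
     (\<forall>i\<in>{1..n}. isometry_op (V i)) \<and>
     (\<forall>i\<in>{1..n}. \<forall>j\<in>{1..n}. i \<noteq> j \<longrightarrow>
        (\<forall>x. cadjoint (V i) (V j x) = scaleC (cnj (z i j)) (V j (cadjoint (V i) x))))"

end

theory Submission
  imports Defs
begin


global_interpretation cvs: vector_space "scaleC :: complex \<Rightarrow> 'a \<Rightarrow> 'a::cinner_space"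
  by unfold_locales (auto simp: scaleC_add_right scaleC_add_left scaleC_scaleC
      scaleC_of_real[of 1, simplified])

lemma csubspace_eq: "csubspace M = cvs.subspace M"
  by (simp add: csubspace_def cvs.subspace_def)

context begin
lemma scaleC_one[simp]: "scaleC 1 x = x" using scaleC_of_real[of 1 x] by simp
end
lemmas [simp] = cvs.scale_zero_left cvs.scale_zero_right
lemmas [simp] = scaleC_scaleC

lemma cinner_zero_left[simp]: "cinner 0 y = 0"
  using cinner_add_left[of 0 0 y] by simp
lemma cinner_minus_left: "cinner (- x) y = - cinner x y"
  using cinner_add_left[of x "-x" y] by (simp add: add_eq_0_iff)
lemma cinner_diff_left: "cinner (x - y) z = cinner x z - cinner y z"
  using cinner_add_left[of x "-y" z] by (simp add: cinner_minus_left)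
lemma cinner_add_right: "cinner x (y + z) = cinner x y + cinner x z"
  by (metis cinner_add_left cinner_commute complex_cnj_add)
lemma cinner_zero_right[simp]: "cinner x 0 = 0"
  by (metis cinner_commute cinner_zero_left complex_cnj_zero)
lemma cinner_diff_right: "cinner x (y - z) = cinner x y - cinner x z"
  by (metis cinner_commute cinner_diff_left complex_cnj_diff)
lemma cinner_scaleC_right: "cinner x (scaleC a y) = cnj a * cinner x y"
  by (metis cinner_commute cinner_scaleC_left complex_cnj_mult)
lemma cinner_sum_left: "cinner (\<Sum>i\<in>A. f i) y = (\<Sum>i\<in>A. cinner (f i) y)"
  by (induct A rule: infinite_finite_induct) (auto simp: cinner_add_left)
lemma cinner_sum_right: "cinner y (\<Sum>i\<in>A. f i) = (\<Sum>i\<in>A. cinner y (f i))"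
  by (induct A rule: infinite_finite_induct) (auto simp: cinner_add_right)

lemma cinner_self_eq_0[simp]: "cinner x x = 0 \<longleftrightarrow> x = 0"
  by (simp add: cinner_self_norm)

lemma cinner_ext_left: "(\<And>u. cinner p u = cinner q u) \<Longrightarrow> p = q"
  by (metis cinner_diff_left cinner_self_eq_0 eq_iff_diff_eq_0)
lemma cinner_ext_right: "(\<And>u. cinner u p = cinner u q) \<Longrightarrow> p = q"
  by (metis cinner_commute cinner_ext_left)

lemma norm_scaleC[simp]: "norm (scaleC a x) = cmod a * norm x"
proof -
  have "cinner (scaleC a x) (scaleC a x) = (a * cnj a) * cinner x x"
    by (simp add: cinner_scaleC_left cinner_scaleC_right mult.assoc)
  also have "a * cnj a = complex_of_real ((cmod a)\<^sup>2)" by (rule complex_norm_square[symmetric])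
  finally have "complex_of_real ((norm (scaleC a x))\<^sup>2) = complex_of_real ((cmod a)\<^sup>2 * (norm x)\<^sup>2)"
    unfolding cinner_self_norm of_real_mult .
  then have "(norm (scaleC a x))\<^sup>2 = (cmod a * norm x)\<^sup>2"
    unfolding of_real_eq_iff power_mult_distrib .
  then show ?thesis by (simp add: power2_eq_iff_nonneg)
qed

lemma norm_add_sq: "(norm (x + y))\<^sup>2 = (norm x)\<^sup>2 + (norm y)\<^sup>2 + 2 * Re (cinner x y)"
proof -
  have "cinner (x + y) (x + y) = cinner x x + cinner y y + (cinner x y + cnj (cinner x y))"
    by (simp add: cinner_add_left cinner_add_right cinner_commute[of y x])
  also have "cinner x y + cnj (cinner x y) = complex_of_real (2 * Re (cinner x y))"
    by (simp add: complex_add_cnj)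
  finally have "complex_of_real ((norm (x + y))\<^sup>2) = complex_of_real ((norm x)\<^sup>2 + (norm y)\<^sup>2 + 2 * Re (cinner x y))"
    unfolding cinner_self_norm of_real_add .
  then show ?thesis unfolding of_real_eq_iff .
qed

lemma cinner_minus_right: "cinner x (- y) = - cinner x y"
  by (metis cinner_commute cinner_minus_left complex_cnj_minus)

lemma norm_diff_sq: "(norm (x - y))\<^sup>2 = (norm x)\<^sup>2 + (norm y)\<^sup>2 - 2 * Re (cinner x y)"
  using norm_add_sq[of x "-y"] by (simp add: cinner_minus_right)

lemma Re_cinner: "Re (cinner x y) = ((norm (x + y))\<^sup>2 - (norm x)\<^sup>2 - (norm y)\<^sup>2) / 2"
  using norm_add_sq[of x y] by simp

lemma Im_cinner: "Im (cinner x y) = Re (cinner x (scaleC \<i> y))"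
  by (simp add: cinner_scaleC_right)

lemma cinner_via_norms: "cinner x y = Complex
   (((norm (x + y))\<^sup>2 - (norm x)\<^sup>2 - (norm y)\<^sup>2) / 2)
   (((norm (x + scaleC \<i> y))\<^sup>2 - (norm x)\<^sup>2 - (norm (scaleC \<i> y))\<^sup>2) / 2)"
  by (simp add: complex_eq_iff Im_cinner Re_cinner)

lemma tendsto_cinner_left:
  assumes "(f \<longlongrightarrow> l) F" shows "((\<lambda>k. cinner (f k) y) \<longlongrightarrow> cinner l y) F"
  unfolding cinner_via_norms
  by (intro tendsto_Complex tendsto_intros assms) auto

lemma tendsto_cinner_right:
  assumes "(f \<longlongrightarrow> l) F" shows "((\<lambda>k. cinner y (f k)) \<longlongrightarrow> cinner y l) F"
proof -
  have "((\<lambda>k. cnj (cinner (f k) y)) \<longlongrightarrow> cnj (cinner l y)) F"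
    by (intro tendsto_cnj tendsto_cinner_left assms)
  then show ?thesis by (simp add: cinner_commute[of y])
qed

lemma continuous_cinner_left: "continuous_on UNIV (\<lambda>x. cinner x y)"
  by (simp add: continuous_on_def tendsto_cinner_left tendsto_ident_at)

lemma closed_orth: "closed {x. \<forall>u\<in>S. cinner x u = 0}"
proof -
  have eq: "{x. \<forall>u\<in>S. cinner x u = 0} = (\<Inter>u\<in>S. {x. cinner x u = 0})" by auto
  have "closed {x. cinner x u = 0}" for u
    by (rule closed_Collect_eq[OF continuous_cinner_left continuous_on_const])
  then show ?thesis unfolding eq by (intro closed_INT) auto
qed


lemma par_ineq:
  fixes a b :: "'a::cinner_space"
  shows "(norm (a - b))\<^sup>2 = 2 * (norm a)\<^sup>2 + 2 * (norm b)\<^sup>2 - (norm (a + b))\<^sup>2"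
  using norm_add_sq[of a b] norm_diff_sq[of a b] by simp

lemma proj_exists:
  fixes M :: "'a::{cinner_space,complete_space} set"
  assumes sub: "csubspace M" and cl: "closed M"
  shows "\<exists>m\<in>M. \<forall>u\<in>M. cinner (x - m) u = 0"
proof -
  have M0: "0 \<in> M" and Madd: "\<And>a b. a \<in> M \<Longrightarrow> b \<in> M \<Longrightarrow> a + b \<in> M"
    and Msc: "\<And>c a. a \<in> M \<Longrightarrow> scaleC c a \<in> M"
    using sub by (auto simp: csubspace_def)
  have MR: "\<And>r a. a \<in> M \<Longrightarrow> scaleR r a \<in> M"
    using Msc scaleC_of_real by metis
  define d where "d = infdist x M"
  have d0: "0 \<le> d" by (simp add: d_def infdist_nonneg)
  have dle: "d \<le> norm (x - y)" if "y \<in> M" for y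
    using infdist_le[OF that, of x] by (simp add: d_def dist_norm)
  have ex: "\<exists>y\<in>M. norm (x - y) < d + e" if "e > 0" for e
  proof (rule ccontr)
    assume "\<not> ?thesis"
    then have "\<forall>y\<in>M. d + e \<le> dist x y" by (auto simp: dist_norm not_less)
    then have "d + e \<le> (INF y\<in>M. dist x y)" using M0 by (intro cINF_greatest) auto
    moreover have "M \<noteq> {}" using M0 by auto
    ultimately show False using that by (simp add: d_def infdist_notempty)
  qed
  define del :: "nat \<Rightarrow> real" where "del k = inverse (real (Suc k))" for k
  have del0: "0 < del k" and del1: "del k \<le> 1" for k
    by (auto simp: del_def field_simps)
  have "\<forall>k. \<exists>y. y \<in> M \<and> norm (x - y) < d + del k"
    using ex del0 by blast
  then obtain f where fM: "\<And>k. f k \<in> M" and fd: "\<And>k. norm (x - f k) < d + del k"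
    by metis
  have key: "(norm (f k - f l))\<^sup>2 \<le> (4 * d + 2) * (del k + del l)" for k l
  proof -
    define a where "a = x - f k"
    define b where "b = x - f l"
    have ab: "a - b = f l - f k" by (simp add: a_def b_def)
    have "a + b = scaleR 2 (x - scaleR (1/2) (f k + f l))"
      by (simp add: a_def b_def algebra_simps scaleR_2)
    moreover have "scaleR (1/2) (f k + f l) \<in> M" using fM Madd MR by blast
    ultimately have "2 * d \<le> norm (a + b)" using dle by auto
    then have "(2 * d)\<^sup>2 \<le> (norm (a + b))\<^sup>2" using d0 by (intro power_mono) auto
    then have s1: "4 * d\<^sup>2 \<le> (norm (a + b))\<^sup>2" by (simp add: power_mult_distrib)
    have na: "(norm a)\<^sup>2 \<le> (d + del k)\<^sup>2" using fd[of k] unfolding a_def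
      by (intro power_mono) auto
    have nb: "(norm b)\<^sup>2 \<le> (d + del l)\<^sup>2" using fd[of l] unfolding b_def
      by (intro power_mono) auto
    have "(norm (f k - f l))\<^sup>2 = (norm (a - b))\<^sup>2" by (simp add: ab norm_minus_commute)
    also have "\<dots> \<le> 2 * (d + del k)\<^sup>2 + 2 * (d + del l)\<^sup>2 - 4 * d\<^sup>2"
      using par_ineq[of a b] na nb s1 by linarith
    also have "\<dots> = 4 * d * (del k + del l) + 2 * (del k * del k + del l * del l)"
      by (simp add: power2_eq_square algebra_simps)
    also have "\<dots> \<le> 4 * d * (del k + del l) + 2 * (del k + del l)"
      using del0[of k] del1[of k] del0[of l] del1[of l]
      by (intro add_left_mono mult_left_mono add_mono) (auto simp: mult_le_cancel_left1)
    finally show ?thesis by (simp add: algebra_simps)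
  qed
  have "Cauchy f"
  proof (rule metric_CauchyI)
    fix e :: real assume e: "e > 0"
    obtain N where N: "inverse (real (Suc N)) < e\<^sup>2 / (2 * (4 * d + 2))"
    proof -
      have "e\<^sup>2 / (2 * (4 * d + 2)) > 0" using e d0 by (simp add: add_nonneg_pos)
      then show ?thesis using reals_Archimedean that by blast
    qed
    show "\<exists>M. \<forall>m\<ge>M. \<forall>n\<ge>M. dist (f m) (f n) < e"
    proof (intro exI allI impI)
      fix k l assume "N \<le> k" "N \<le> l"
      then have "del k \<le> inverse (real (Suc N))" "del l \<le> inverse (real (Suc N))"
        by (auto simp: del_def intro!: le_imp_inverse_le)
      then have "(4 * d + 2) * (del k + del l) \<le> (4 * d + 2) * (2 * inverse (real (Suc N)))"
        using d0 by (intro mult_left_mono) auto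
      also have "\<dots> < e\<^sup>2" using N d0 by (simp add: field_simps)
      finally have "(dist (f k) (f l))\<^sup>2 < e\<^sup>2" using key[of k l] by (simp add: dist_norm)
      then show "dist (f k) (f l) < e" using e by (simp add: power_less_imp_less_base)
    qed
  qed
  then obtain m where fm: "f \<longlonglongrightarrow> m" using Cauchy_convergent_iff convergent_def by blast
  have mM: "m \<in> M" using closed_sequentially[OF cl fM fm] .
  have "norm (x - m) \<le> d"
  proof (rule LIMSEQ_le)
    show "(\<lambda>k. norm (x - f k)) \<longlonglongrightarrow> norm (x - m)" by (intro tendsto_intros fm)
    show "(\<lambda>k. d + del k) \<longlonglongrightarrow> d"
      using tendsto_add[OF tendsto_const LIMSEQ_inverse_real_of_nat, of d] by (simp add: del_def)
    show "\<exists>N. \<forall>n\<ge>N. norm (x - f n) \<le> d + del n" using fd less_imp_le by blast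
  qed
  then have nd: "norm (x - m) = d" using dle[OF mM] by simp
  show ?thesis
  proof (intro bexI[OF _ mM] ballI)
    fix u assume uM: "u \<in> M"
    define e where "e = x - m"
    define c where "c = cinner e u"
    show "cinner (x - m) u = 0"
    proof (rule ccontr)
      assume "cinner (x - m) u \<noteq> 0"
      then have c0: "c \<noteq> 0" by (simp add: c_def e_def)
      define s where "s = 1 / ((norm u)\<^sup>2 + 1)"
      have "(norm u)\<^sup>2 + 1 > 0" by (simp add: add_nonneg_pos)
      then have s0: "s > 0" by (simp add: s_def)
      have s1: "s * (norm u)\<^sup>2 < 1"
      proof -
        have "0 < 1 + (norm u)\<^sup>2" by (simp add: add_pos_nonneg)
        then show ?thesis by (simp add: s_def divide_less_eq)
      qed
      define t where "t = complex_of_real s * c"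
      have "m + scaleC t u \<in> M" using mM uM Madd Msc by blast
      then have "d \<le> norm (e - scaleC t u)" using dle by (simp add: e_def algebra_simps)
      then have "(norm e)\<^sup>2 \<le> (norm (e - scaleC t u))\<^sup>2"
        using nd d0 by (simp add: e_def power_mono)
      then have A: "(norm e)\<^sup>2 \<le> (norm e)\<^sup>2 + (cmod t * norm u)\<^sup>2 - 2 * Re (cinner e (scaleC t u))"
        by (simp add: norm_diff_sq)
      have hc: "Re c * Re c + Im c * Im c = cmod c * cmod c"
        using cmod_power2[of c] by (simp add: power2_eq_square)
      have B: "Re (cinner e (scaleC t u)) = s * (cmod c)\<^sup>2"
        by (simp add: cinner_scaleC_right t_def c_def[symmetric] mult.assoc complex_norm_square[symmetric]
            hc power2_eq_square del: of_real_power)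
      have C: "(cmod t * norm u)\<^sup>2 = s * (cmod c)\<^sup>2 * (s * (norm u)\<^sup>2)"
        using s0 by (simp add: t_def norm_mult power_mult_distrib power2_eq_square)
      have "0 \<le> s * (cmod c)\<^sup>2 * (s * (norm u)\<^sup>2) - s * (cmod c)\<^sup>2 * 2"
        using A B C by linarith
      then have "0 \<le> s * (cmod c)\<^sup>2 * (s * (norm u)\<^sup>2 - 2)"
        by (simp only: right_diff_distrib)
      moreover have "s * (cmod c)\<^sup>2 > 0" using s0 c0 by simp
      ultimately have "s * (norm u)\<^sup>2 - 2 \<ge> 0" by (simp add: zero_le_mult_iff)
      then show False using s1 by simp
    qed
  qed
qed


lemma bcl_bl: "bounded_clinear T \<Longrightarrow> bounded_linear T"
  by (simp add: bounded_clinear_def)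
lemma bcl_add: "bounded_clinear T \<Longrightarrow> T (x + y) = T x + T y"
  by (simp add: bounded_clinear_def linear_add bounded_linear.linear)
lemma bcl_scaleC: "bounded_clinear T \<Longrightarrow> T (scaleC c x) = scaleC c (T x)"
  by (simp add: bounded_clinear_def)
lemma bcl_zero: "bounded_clinear T \<Longrightarrow> T 0 = 0"
  by (simp add: bounded_clinear_def linear_0 bounded_linear.linear)
lemma bcl_diff: "bounded_clinear T \<Longrightarrow> T (x - y) = T x - T y"
  by (simp add: bounded_clinear_def linear_diff bounded_linear.linear)
lemma bcl_sum: "bounded_clinear T \<Longrightarrow> T (\<Sum>i\<in>A. f i) = (\<Sum>i\<in>A. T (f i))"
  by (simp add: bounded_clinear_def linear_sum bounded_linear.linear)
lemma bcl_tendsto: "bounded_clinear T \<Longrightarrow> (f \<longlongrightarrow> l) F \<Longrightarrow> ((\<lambda>k. T (f k)) \<longlongrightarrow> T l) F"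
  by (simp add: bounded_clinear_def bounded_linear.tendsto)

lemma iso_bcl: "isometry_op V \<Longrightarrow> bounded_clinear V" by (simp add: isometry_op_def)
lemma iso_norm: "isometry_op V \<Longrightarrow> norm (V x) = norm x" by (simp add: isometry_op_def)

lemma iso_cinner:
  assumes V: "isometry_op V" shows "cinner (V x) (V y) = cinner x y"
proof -
  have add: "V a + V b = V (a + b)" for a b using bcl_add[OF iso_bcl[OF V]] by simp
  have sc: "scaleC c (V a) = V (scaleC c a)" for c a using bcl_scaleC[OF iso_bcl[OF V]] by simp
  have nrm: "norm (V a) = norm a" for a using iso_norm[OF V] .
  show ?thesis
  proof (rule complex_eqI)
    show "Re (cinner (V x) (V y)) = Re (cinner x y)"
      by (simp only: Re_cinner add nrm)
    show "Im (cinner (V x) (V y)) = Im (cinner x y)"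
      by (simp only: Im_cinner sc Re_cinner add nrm)
  qed
qed

lemma closed_range_iso:
  fixes V :: "'a::{cinner_space,complete_space} \<Rightarrow> 'a"
  assumes V: "isometry_op V" shows "closed (range V)"
  unfolding closed_sequential_limits
proof (intro allI impI, elim conjE)
  fix y l assume yr: "\<forall>n. y n \<in> range V" and yl: "y \<longlonglongrightarrow> l"
  have "\<forall>n. \<exists>a. y n = V a" using yr by blast
  then obtain x where x: "\<And>n. y n = V (x n)" by metis
  have dist: "dist (x k) (x m) = dist (y k) (y m)" for k m
    using iso_norm[OF V, of "x k - x m"] bcl_diff[OF iso_bcl[OF V]]
    by (simp add: dist_norm x)
  have "Cauchy y" using yl by (rule LIMSEQ_imp_Cauchy)
  then have "Cauchy x" unfolding Cauchy_def dist by blast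
  then obtain p where xp: "x \<longlonglongrightarrow> p" using Cauchy_convergent_iff convergent_def by blast
  have "(\<lambda>n. V (x n)) \<longlonglongrightarrow> V p" by (rule bcl_tendsto[OF iso_bcl[OF V] xp])
  then have "y \<longlonglongrightarrow> V p" by (simp add: x[abs_def])
  then have "l = V p" using yl LIMSEQ_unique by blast
  then show "l \<in> range V" by simp
qed

lemma csubspace_range: assumes "bounded_clinear V" shows "csubspace (range V)"
  unfolding csubspace_def
proof (intro conjI ballI allI)
  show "0 \<in> range V" using bcl_zero[OF assms] by (metis rangeI)
  show "x + y \<in> range V" if xy: "x \<in> range V" "y \<in> range V" for x y
  proof -
    obtain a b where "x = V a" "y = V b" using xy by blast
    then show ?thesis using bcl_add[OF assms, of a b] by (metis rangeI)
  qed
  show "scaleC c x \<in> range V" if xr: "x \<in> range V" for c x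
  proof -
    obtain a where "x = V a" using xr by blast
    then show ?thesis using bcl_scaleC[OF assms, of c a] by (metis rangeI)
  qed
qed

lemma adjoint_iso:
  fixes V :: "'a::{cinner_space,complete_space} \<Rightarrow> 'a"
  assumes V: "isometry_op V" shows "cinner (V x) y = cinner x (cadjoint V y)"
proof -
  have "\<forall>y. \<exists>s. \<forall>u. cinner (y - V s) (V u) = 0"
  proof
    fix y
    obtain p where "p \<in> range V" "\<forall>u\<in>range V. cinner (y - p) u = 0"
      using proj_exists[OF csubspace_range[OF iso_bcl[OF V]] closed_range_iso[OF V]] by blast
    then show "\<exists>s. \<forall>u. cinner (y - V s) (V u) = 0" by auto
  qed
  then obtain S where S: "\<And>y u. cinner (y - V (S y)) (V u) = 0" by metis
  have "cinner (V x) y = cinner x (S y)" for x y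
  proof -
    have "cinner (V x) y = cinner (V x) (y - V (S y)) + cinner (V x) (V (S y))"
      by (simp add: cinner_diff_right)
    also have "cinner (V x) (y - V (S y)) = 0"
      using S[of y x] by (metis cinner_commute complex_cnj_zero)
    finally show ?thesis by (simp add: iso_cinner[OF V])
  qed
  then have "\<exists>S. \<forall>x y. cinner (V x) y = cinner x (S y)" by blast
  from someI_ex[OF this] show ?thesis unfolding cadjoint_def by blast
qed


definition orthonormal :: "'a::cinner_space set \<Rightarrow> bool" where
  "orthonormal E \<longleftrightarrow> (\<forall>e\<in>E. cinner e e = 1) \<and> (\<forall>e\<in>E. \<forall>e'\<in>E. e \<noteq> e' \<longrightarrow> cinner e e' = 0)"

lemma ortho_coef:
  assumes fin: "finite E" and on: "orthonormal E" and e0: "e0 \<in> E"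
  shows "cinner (\<Sum>e\<in>E. scaleC (c e) e) e0 = c e0"
proof -
  have "cinner (\<Sum>e\<in>E. scaleC (c e) e) e0 = (\<Sum>e\<in>E. c e * cinner e e0)"
    by (simp add: cinner_sum_left cinner_scaleC_left)
  also have "\<dots> = (\<Sum>e\<in>E. if e = e0 then c e else 0)"
  proof (rule sum.cong)
    fix e assume "e \<in> E"
    then show "c e * cinner e e0 = (if e = e0 then c e else 0)"
      using on e0 by (auto simp: orthonormal_def)
  qed simp
  also have "\<dots> = c e0" using fin e0 by simp
  finally show ?thesis .
qed

lemma ortho_expand:
  assumes fin: "finite E" and on: "orthonormal E" and w: "w \<in> cvs.span E"
  shows "w = (\<Sum>e\<in>E. scaleC (cinner w e) e)"
proof -
  obtain c where wc: "w = (\<Sum>e\<in>E. scaleC (c e) e)"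
    using w cvs.span_finite[OF fin] by auto
  have "cinner w e = c e" if "e \<in> E" for e using ortho_coef[OF fin on that] wc by simp
  then show ?thesis using wc by (metis (no_types, lifting) sum.cong)
qed

lemma ortho_coef_le:
  assumes fin: "finite E" and on: "orthonormal E" and w: "w \<in> cvs.span E" and e0: "e0 \<in> E"
  shows "cmod (cinner w e0) \<le> norm w"
proof -
  have "cinner w w = cinner (\<Sum>e\<in>E. scaleC (cinner w e) e) w"
    by (rule arg_cong[where f="\<lambda>a. cinner a w", OF ortho_expand[OF fin on w]])
  also have "\<dots> = (\<Sum>e\<in>E. cinner w e * cinner e w)"
    by (simp add: cinner_sum_left cinner_scaleC_left)
  also have "\<dots> = (\<Sum>e\<in>E. cinner w e * cnj (cinner w e))"
    by (intro sum.cong refl) (metis cinner_commute)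
  also have "\<dots> = complex_of_real (\<Sum>e\<in>E. (cmod (cinner w e))\<^sup>2)"
    by (simp only: of_real_sum complex_norm_square)
  finally have "(norm w)\<^sup>2 = (\<Sum>e\<in>E. (cmod (cinner w e))\<^sup>2)"
    by (simp only: cinner_self_norm of_real_eq_iff)
  moreover have "(cmod (cinner w e0))\<^sup>2 \<le> (\<Sum>e\<in>E. (cmod (cinner w e))\<^sup>2)"
    using fin e0 by (intro member_le_sum) auto
  ultimately show ?thesis by (simp add: power2_le_imp_le)
qed

lemma ortho_indep:
  assumes fin: "finite E" and on: "orthonormal E"
  shows "cvs.independent E"
proof (rule cvs.independent_if_scalars_zero[OF fin])
  fix c v assume "(\<Sum>v\<in>E. scaleC (c v) v) = 0" "v \<in> E"
  then show "c v = 0" using ortho_coef[OF fin on, of v c] by simp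
qed

lemma gram_schmidt:
  assumes "finite F"
  shows "\<exists>E. finite E \<and> orthonormal E \<and> cvs.span E = cvs.span F"
  using assms
proof (induction F rule: finite_induct)
  case empty
  then show ?case by (intro exI[of _ "{}"]) (auto simp: orthonormal_def)
next
  case (insert x F)
  then obtain E where fin: "finite E" and on: "orthonormal E" and sp: "cvs.span E = cvs.span F"
    by blast
  have spx: "cvs.span (insert x F) = cvs.span (insert x E)"
    by (simp add: cvs.span_insert sp)
  define p where "p = (\<Sum>e\<in>E. scaleC (cinner x e) e)"
  define r where "r = x - p"
  have pE: "p \<in> cvs.span E"
    unfolding p_def by (intro cvs.span_sum cvs.span_scale cvs.span_base)
  have rorth: "cinner r e = 0" if "e \<in> E" for e
    using ortho_coef[OF fin on that, of "\<lambda>e. cinner x e"]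
    by (simp add: r_def p_def cinner_diff_left)
  show ?case
  proof (cases "r = 0")
    case True
    then have "x \<in> cvs.span E" using pE by (simp add: r_def)
    then have "cvs.span (insert x E) = cvs.span E" by (rule cvs.span_redundant)
    then show ?thesis using fin on spx by (intro exI[of _ E]) simp
  next
    case False
    define e0 where "e0 = scaleC (complex_of_real (1 / norm r)) r"
    have nr: "norm r > 0" using False by simp
    have "norm e0 = 1" using nr by (simp add: e0_def norm_divide)
    then have e00: "cinner e0 e0 = 1" by (simp add: cinner_self_norm)
    have e0e: "cinner e0 e = 0" "cinner e e0 = 0" if "e \<in> E" for e
      using rorth[OF that] by (simp_all add: e0_def cinner_scaleC_left cinner_scaleC_right,
          metis cinner_commute complex_cnj_zero)
    have on': "orthonormal (insert e0 E)"
      using on e00 e0e unfolding orthonormal_def by blast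
    have xr: "x = scaleC (complex_of_real (norm r)) e0 + p"
      using nr by (simp add: e0_def r_def)
    have s1: "insert e0 E \<subseteq> cvs.span (insert x E)"
    proof -
      have "e0 = scaleC (complex_of_real (1 / norm r)) (x - p)" by (simp add: e0_def r_def)
      moreover have "x - p \<in> cvs.span (insert x E)"
        using pE cvs.span_mono[of E "insert x E"]
        by (intro cvs.span_diff) (auto intro: cvs.span_base)
      ultimately have "e0 \<in> cvs.span (insert x E)" by (simp add: cvs.span_scale)
      then show ?thesis using cvs.span_superset[of "insert x E"] by blast
    qed
    have s2: "insert x E \<subseteq> cvs.span (insert e0 E)"
    proof -
      have "x \<in> cvs.span (insert e0 E)"
        unfolding xr using pE cvs.span_mono[of E "insert e0 E"]
        by (intro cvs.span_add cvs.span_scale) (auto intro: cvs.span_base)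
      then show ?thesis using cvs.span_superset[of "insert e0 E"] by blast
    qed
    have "cvs.span (insert e0 E) = cvs.span (insert x E)"
      using cvs.span_minimal[OF s1 cvs.subspace_span] cvs.span_minimal[OF s2 cvs.subspace_span]
      by blast
    then show ?thesis using fin on' spx by (intro exI[of _ "insert e0 E"]) auto
  qed
qed


lemma fd_main:
  fixes W :: "'a::cinner_space set" and T :: "'a \<Rightarrow> 'a"
  assumes sub: "csubspace W" and fd: "cfinite_dim W" and T: "bounded_clinear T"
    and TW: "T ` W \<subseteq> W" and inj: "\<forall>x\<in>W. T x = 0 \<longrightarrow> x = 0"
  shows "W \<subseteq> T ` W \<and> (\<exists>m>0. \<forall>w\<in>W. m * norm w \<le> norm (T w))"
proof -
  obtain F where finF: "finite F" and FW: "F \<subseteq> W" and WF: "W \<subseteq> cspan F"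
    using fd by (auto simp: cfinite_dim_def)
  have subW: "cvs.subspace W" using sub by (simp add: csubspace_eq)
  have "cspan F \<subseteq> cvs.span F"
  proof
    fix y assume "y \<in> cspan F"
    then obtain c where yc: "y = (\<Sum>x\<in>F. scaleC (c x) x)" by (auto simp: cspan_def)
    show "y \<in> cvs.span F"
      unfolding yc by (rule cvs.span_sum, rule cvs.span_scale, erule cvs.span_base)
  qed
  moreover have "cvs.span F \<subseteq> W" by (rule cvs.span_minimal[OF FW subW])
  ultimately have WeqF: "W = cvs.span F" using WF by blast
  obtain E where finE: "finite E" and onE: "orthonormal E" and spE: "cvs.span E = cvs.span F"
    using gram_schmidt[OF finF] by blast
  have WE: "W = cvs.span E" using WeqF spE by simp
  have EW: "E \<subseteq> W" using WE cvs.span_superset by blast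
  have indE: "cvs.independent E" by (rule ortho_indep[OF finE onE])
  have injW: "inj_on T W"
  proof (rule inj_onI)
    fix x y assume "x \<in> W" "y \<in> W" "T x = T y"
    then have "x - y \<in> W" "T (x - y) = 0" using subW cvs.subspace_diff bcl_diff[OF T] by auto
    then show "x = y" using inj by auto
  qed
  have injE: "inj_on T E" using inj_on_subset[OF injW EW] .
  have lin: "T (\<Sum>e\<in>E. scaleC (c e) e) = (\<Sum>e\<in>E. scaleC (c e) (T e))" for c
    by (simp add: bcl_sum[OF T] bcl_scaleC[OF T])
  have sumW: "(\<Sum>e\<in>E. scaleC (c e) e) \<in> W" for c
    unfolding WE by (intro cvs.span_sum cvs.span_scale cvs.span_base)
  have reidx: "(\<Sum>v\<in>T ` E. scaleC (f v) v) = T (\<Sum>e\<in>E. scaleC (f (T e)) e)" for f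
    using sum.reindex[OF injE, of "\<lambda>v. scaleC (f v) v"] lin[of "\<lambda>e. f (T e)"] by simp
  have indTE: "cvs.independent (T ` E)"
  proof (rule cvs.independent_if_scalars_zero[OF finite_imageI[OF finE]])
    fix f v assume s0: "(\<Sum>x\<in>T ` E. scaleC (f x) x) = 0" and v: "v \<in> T ` E"
    then obtain e0 where e0: "e0 \<in> E" "v = T e0" by blast
    have "T (\<Sum>e\<in>E. scaleC (f (T e)) e) = 0" using s0 reidx by simp
    then have "(\<Sum>e\<in>E. scaleC (f (T e)) e) = 0" using inj sumW[of "\<lambda>e. f (T e)"] by blast
    then have "cinner (\<Sum>e\<in>E. scaleC (f (T e)) e) e0 = 0" by simp
    then show "f v = 0" using ortho_coef[OF finE onE e0(1)] e0 by simp
  qed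
  have cardTE: "card (T ` E) = card E" using card_image[OF injE] .
  have TEW: "T ` E \<subseteq> W" using TW EW by blast
  have W1: "W \<subseteq> cvs.span (T ` E)"
  proof
    fix a assume aW: "a \<in> W"
    show "a \<in> cvs.span (T ` E)"
    proof (rule ccontr)
      assume na: "a \<notin> cvs.span (T ` E)"
      then have ind: "cvs.independent (insert a (T ` E))" by (rule cvs.independent_insertI[OF _ indTE])
      have "insert a (T ` E) \<subseteq> cvs.span E" using aW TEW WE by auto
      then have "card (insert a (T ` E)) \<le> card E"
        using cvs.independent_span_bound[OF finE ind] by blast
      moreover have "a \<notin> T ` E" using na cvs.span_superset by blast
      ultimately show False using cardTE finE by simp
    qed
  qed
  have "cvs.span (T ` E) \<subseteq> T ` W"
  proof
    fix y assume "y \<in> cvs.span (T ` E)"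
    then obtain u where "y = (\<Sum>v\<in>T ` E. scaleC (u v) v)"
      using cvs.span_finite[OF finite_imageI[OF finE]] by auto
    then have "y = T (\<Sum>e\<in>E. scaleC (u (T e)) e)" using reidx by simp
    then show "y \<in> T ` W" using sumW[of "\<lambda>e. u (T e)"] by blast
  qed
  with W1 have part1: "W \<subseteq> T ` W" by blast
  have "\<forall>e\<in>E. \<exists>s. s \<in> W \<and> T s = e" using part1 EW by blast
  then obtain s where sW: "\<And>e. e \<in> E \<Longrightarrow> s e \<in> W" and Ts: "\<And>e. e \<in> E \<Longrightarrow> T (s e) = e"
    by metis
  define C where "C = (\<Sum>e\<in>E. norm (s e))"
  have C0: "C \<ge> 0" by (simp add: C_def sum_nonneg)
  define m where "m = 1 / (C + 1)"
  have m0: "m > 0" using C0 by (simp add: m_def)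
  have bound: "m * norm w \<le> norm (T w)" if wW: "w \<in> W" for w
  proof -
    define u where "u = T w"
    have uW: "u \<in> cvs.span E" using TW wW WE by (auto simp: u_def)
    define w' where "w' = (\<Sum>e\<in>E. scaleC (cinner u e) (s e))"
    have w'W: "w' \<in> W" unfolding w'_def
      by (intro cvs.subspace_sum[OF subW] cvs.subspace_scale[OF subW] sW)
    have "T w' = (\<Sum>e\<in>E. scaleC (cinner u e) (T (s e)))"
      by (simp add: w'_def bcl_sum[OF T] bcl_scaleC[OF T])
    also have "\<dots> = (\<Sum>e\<in>E. scaleC (cinner u e) e)" by (intro sum.cong) (auto simp: Ts)
    also have "\<dots> = u" using ortho_expand[OF finE onE uW] by simp
    finally have "T w' = T w" by (simp add: u_def)
    then have ww: "w = w'" using injW wW w'W by (auto dest: inj_onD)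
    have "norm w \<le> (\<Sum>e\<in>E. norm (scaleC (cinner u e) (s e)))"
      unfolding ww w'_def by (rule norm_sum)
    also have "\<dots> = (\<Sum>e\<in>E. cmod (cinner u e) * norm (s e))" by simp
    also have "\<dots> \<le> (\<Sum>e\<in>E. norm u * norm (s e))"
      by (intro sum_mono mult_right_mono ortho_coef_le[OF finE onE uW]) auto
    also have "\<dots> = norm u * C" by (simp add: C_def sum_distrib_left)
    finally have nw: "norm w \<le> norm u * C" .
    have "m * norm w \<le> m * (norm u * C)" using nw m0 by (simp add: mult_left_mono)
    also have "\<dots> = norm u * (C / (C + 1))" by (simp add: m_def)
    also have "\<dots> \<le> norm u * 1" using C0 by (intro mult_left_mono) auto
    finally show ?thesis by (simp add: u_def)
  qed
  show ?thesis using part1 m0 bound by blast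
qed


lemma bounded_linear_scaleC: "bounded_linear (scaleC c :: 'a::cinner_space \<Rightarrow> 'a)"
proof (rule bounded_linear_intro[where K="cmod c"])
  show "scaleC c (x + y) = scaleC c x + scaleC c y" for x y :: 'a by (rule scaleC_add_right)
  show "scaleC c (scaleR r x) = scaleR r (scaleC c x)" for r and x :: 'a
    by (simp flip: scaleC_of_real add: mult.commute)
  show "norm (scaleC c x) \<le> norm x * cmod c" for x :: 'a by (simp add: mult.commute)
qed

locale dnc_setting =
  fixes n :: nat
    and z :: "nat \<Rightarrow> nat \<Rightarrow> complex"
    and V :: "nat \<Rightarrow> 'h::{cinner_space, complete_space} \<Rightarrow> 'h"
    and T :: "'h \<Rightarrow> 'h"
  assumes n: "n \<ge> 1"
    and z_unimod: "\<forall>i\<in>{1..n}. \<forall>j\<in>{1..n}. i \<noteq> j \<longrightarrow> norm (z i j) = 1"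
    and z_sym: "\<forall>i\<in>{1..n}. \<forall>j\<in>{1..n}. i \<noteq> j \<longrightarrow> z j i = cnj (z i j)"
    and dnc: "doubly_noncommuting n z V"
    and pure: "\<forall>i\<in>{1..n}. pure_isometry (V i)"
    and fin: "cfinite_dim (\<Inter>i\<in>{1..n}. {x. cadjoint (V i) x = 0})"
    and T: "bounded_clinear T"
    and comm: "\<forall>i\<in>{1..n}. \<exists>\<tau>. norm \<tau> = 1 \<and> (\<forall>x. T (V i x) = scaleC \<tau> (V i (T x)))"
    and inv: "\<forall>i\<in>{1..n}. T ` {x. cadjoint (V i) x = 0} \<subseteq> {x. cadjoint (V i) x = 0}"
    and inj: "\<forall>x\<in>(\<Inter>i\<in>{1..n}. {x. cadjoint (V i) x = 0}). T x = 0 \<longrightarrow> x = 0"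
begin

definition A :: "nat \<Rightarrow> 'h \<Rightarrow> 'h" where "A i = cadjoint (V i)"

lemma iso: "i \<in> {1..n} \<Longrightarrow> isometry_op (V i)"
  using dnc by (simp add: doubly_noncommuting_def)

lemma Vadd: "i \<in> {1..n} \<Longrightarrow> V i (x + y) = V i x + V i y"
  using bcl_add[OF iso_bcl[OF iso]] .
lemma Vsc: "i \<in> {1..n} \<Longrightarrow> V i (scaleC c x) = scaleC c (V i x)"
  using bcl_scaleC[OF iso_bcl[OF iso]] .
lemma Vdiff: "i \<in> {1..n} \<Longrightarrow> V i (x - y) = V i x - V i y"
  using bcl_diff[OF iso_bcl[OF iso]] .
lemma V0: "i \<in> {1..n} \<Longrightarrow> V i 0 = 0"
  using bcl_zero[OF iso_bcl[OF iso]] .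

lemma adj: "i \<in> {1..n} \<Longrightarrow> cinner (V i x) y = cinner x (A i y)"
  unfolding A_def by (rule adjoint_iso[OF iso])
lemma adj2: "i \<in> {1..n} \<Longrightarrow> cinner (A i y) x = cinner y (V i x)"
  by (metis adj cinner_commute)

lemma Aadd: "i \<in> {1..n} \<Longrightarrow> A i (x + y) = A i x + A i y"
  by (rule cinner_ext_right) (simp add: adj[symmetric] cinner_add_right)
lemma Asc: "i \<in> {1..n} \<Longrightarrow> A i (scaleC c x) = scaleC c (A i x)"
  by (rule cinner_ext_right) (simp add: adj[symmetric] cinner_scaleC_right)
lemma Adiff: "i \<in> {1..n} \<Longrightarrow> A i (x - y) = A i x - A i y"
  by (rule cinner_ext_right) (simp add: adj[symmetric] cinner_diff_right)
lemma A0: "i \<in> {1..n} \<Longrightarrow> A i 0 = 0"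
  by (rule cinner_ext_right) (simp add: adj[symmetric])
lemma AV: "i \<in> {1..n} \<Longrightarrow> A i (V i x) = x"
  by (rule cinner_ext_right) (simp add: adj[symmetric] iso_cinner[OF iso])

lemma kerA: "i \<in> {1..n} \<Longrightarrow> A i x = 0 \<longleftrightarrow> (\<forall>u. cinner x (V i u) = 0)"
  by (metis adj2 cinner_self_eq_0 cinner_zero_left)

lemma dncA: "i \<in> {1..n} \<Longrightarrow> j \<in> {1..n} \<Longrightarrow> i \<noteq> j \<Longrightarrow>
    A i (V j x) = scaleC (cnj (z i j)) (V j (A i x))"
  using dnc by (simp add: doubly_noncommuting_def A_def)

lemma zz: "i \<in> {1..n} \<Longrightarrow> j \<in> {1..n} \<Longrightarrow> i \<noteq> j \<Longrightarrow> cnj (z i j) * z i j = 1"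
  using z_unimod by (metis complex_norm_square mult.commute of_real_1 one_power2)

lemma zji: "i \<in> {1..n} \<Longrightarrow> j \<in> {1..n} \<Longrightarrow> i \<noteq> j \<Longrightarrow> z j i = cnj (z i j)"
  using z_sym by blast

lemma Vcomm:
  assumes i: "i \<in> {1..n}" and j: "j \<in> {1..n}" and ij: "i \<noteq> j"
  shows "V j (V i x) = scaleC (cnj (z i j)) (V i (V j x))"
proof -
  define c where "c = cnj (z i j)"
  define D where "D = V j (V i x) - scaleC c (V i (V j x))"
  have hi: "A i D = 0"
    by (simp add: D_def Adiff[OF i] Asc[OF i] dncA[OF i j ij] AV[OF i] c_def)
  have hj: "A j D = 0"
  proof -
    have "A j D = V i x - scaleC (c * z i j) (V i x)"
      using zji[OF i j ij] by (simp add: D_def Adiff[OF j] Asc[OF j] dncA[OF j i ij[symmetric]] AV[OF j])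
    then show ?thesis using zz[OF i j ij] by (simp add: c_def)
  qed
  have "cinner D D = cinner D (V j (V i x) - scaleC c (V i (V j x)))"
    by (subst (2) D_def) (rule refl)
  also have "\<dots> = cinner D (V j (V i x)) - cnj c * cinner D (V i (V j x))"
    by (simp add: cinner_diff_right cinner_scaleC_right)
  also have "cinner D (V j (V i x)) = cinner (A j D) (V i x)" by (simp add: adj2[OF j])
  also have "cinner D (V i (V j x)) = cinner (A i D) (V j x)" by (simp add: adj2[OF i])
  finally have "cinner D D = 0" using hi hj by simp
  then show ?thesis by (simp add: D_def c_def)
qed

lemma AA:
  assumes i: "i \<in> {1..n}" and j: "j \<in> {1..n}" and ij: "i \<noteq> j"
  shows "A j (A i x) = scaleC (z j i) (A i (A j x))"
proof (rule cinner_ext_left)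
  fix u
  have "cinner (A j (A i x)) u = cinner x (V i (V j u))" by (simp add: adj2[OF i] adj2[OF j])
  also have "\<dots> = cinner x (scaleC (cnj (z j i)) (V j (V i u)))"
    by (simp add: Vcomm[OF j i ij[symmetric]])
  also have "\<dots> = z j i * cinner (A i (A j x)) u"
    by (simp add: cinner_scaleC_right adj2[OF i] adj2[OF j])
  finally show "cinner (A j (A i x)) u = cinner (scaleC (z j i) (A i (A j x))) u"
    by (simp add: cinner_scaleC_left)
qed

lemma Apow_zero: "i \<in> {1..n} \<Longrightarrow> (A i ^^ N) 0 = 0"
  by (induct N) (simp_all add: A0)
lemma Apow_diff: "i \<in> {1..n} \<Longrightarrow> (A i ^^ N) (x - y) = (A i ^^ N) x - (A i ^^ N) y"
  by (induct N) (simp_all add: Adiff)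
lemma Apow_add: "i \<in> {1..n} \<Longrightarrow> (A i ^^ N) (x + y) = (A i ^^ N) x + (A i ^^ N) y"
  by (induct N) (simp_all add: Aadd)
lemma Apow_sc: "i \<in> {1..n} \<Longrightarrow> (A i ^^ N) (scaleC c x) = scaleC c ((A i ^^ N) x)"
  by (induct N) (simp_all add: Asc)

lemma AApow:
  assumes i: "i \<in> {1..n}" and j: "j \<in> {1..n}" and ij: "i \<noteq> j"
  shows "(A j ^^ N) (A i x) = scaleC (z j i ^ N) (A i ((A j ^^ N) x))"
  by (induct N) (simp_all add: Asc[OF j] Asc[OF i] AA[OF i j ij] mult.commute)

lemma AVpow:
  assumes i: "i \<in> {1..n}" and j: "j \<in> {1..n}" and ij: "i \<noteq> j"
  shows "(A j ^^ N) (V i x) = scaleC (cnj (z j i) ^ N) (V i ((A j ^^ N) x))"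
  by (induct N) (simp_all add: Asc[OF j] Vsc[OF i] dncA[OF j i ij[symmetric]] mult.commute)

lemma kerAA: "i \<in> {1..n} \<Longrightarrow> j \<in> {1..n} \<Longrightarrow> i \<noteq> j \<Longrightarrow> A i x = 0 \<Longrightarrow> A i (A j x) = 0"
  using AA[of j i x] by (simp add: A0)
lemma kerAV: "i \<in> {1..n} \<Longrightarrow> j \<in> {1..n} \<Longrightarrow> i \<noteq> j \<Longrightarrow> A i x = 0 \<Longrightarrow> A i (V j x) = 0"
  using dncA[of i j x] by (simp add: V0)

end


context dnc_setting begin

definition tau :: "nat \<Rightarrow> complex" where
  "tau i = (SOME t. norm t = 1 \<and> (\<forall>x. T (V i x) = scaleC t (V i (T x))))"

lemma tau: assumes "i \<in> {1..n}"
  shows "norm (tau i) = 1" "T (V i x) = scaleC (tau i) (V i (T x))"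
proof -
  have "\<exists>t. norm t = 1 \<and> (\<forall>x. T (V i x) = scaleC t (V i (T x)))" using comm assms by blast
  from someI_ex[OF this] show "norm (tau i) = 1" "T (V i x) = scaleC (tau i) (V i (T x))"
    unfolding tau_def by blast+
qed

lemma Tadd: "T (x + y) = T x + T y" using bcl_add[OF T] .
lemma Tsc: "T (scaleC c x) = scaleC c (T x)" using bcl_scaleC[OF T] .
lemma Tdiff: "T (x - y) = T x - T y" using bcl_diff[OF T] .
lemma T0: "T 0 = 0" using bcl_zero[OF T] .

lemma TinvA: assumes i: "i \<in> {1..n}" and Ax: "A i x = 0" shows "A i (T x) = 0"
proof -
  have "T ` {x. A i x = 0} \<subseteq> {x. A i x = 0}" using inv i by (simp add: A_def)
  then show ?thesis using Ax by blast
qed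

lemma TA: assumes i: "i \<in> {1..n}" shows "A i (T x) = scaleC (tau i) (T (A i x))"
proof -
  define e where "e = x - V i (A i x)"
  have Ae: "A i e = 0" by (simp add: e_def Adiff[OF i] AV[OF i])
  have "A i (T x) = A i (T (e + V i (A i x)))" by (simp add: e_def)
  also have "\<dots> = A i (T e) + A i (T (V i (A i x)))"
    by (simp only: Tadd Aadd[OF i])
  also have "A i (T e) = 0" by (rule TinvA[OF i Ae])
  also have "A i (T (V i (A i x))) = scaleC (tau i) (T (A i x))"
    by (simp add: tau(2)[OF i] Asc[OF i] AV[OF i])
  finally show ?thesis by simp
qed

lemma TE: assumes i: "i \<in> {1..n}" shows "T x - V i (A i (T x)) = T (x - V i (A i x))"
  by (simp add: TA[OF i] Vsc[OF i] tau(2)[OF i] Tdiff)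

lemma decomp: assumes i: "i \<in> {1..n}"
  shows "(norm x)\<^sup>2 = (norm (x - V i (A i x)))\<^sup>2 + (norm (A i x))\<^sup>2"
proof -
  have "cinner (x - V i (A i x)) (V i (A i x)) = 0"
    by (simp add: adj2[OF i, symmetric] Adiff[OF i] AV[OF i])
  then show ?thesis using norm_add_sq[of "x - V i (A i x)" "V i (A i x)"]
    by (simp add: iso_norm[OF iso[OF i]])
qed

definition W :: "'h set" where "W = {x. \<forall>i\<in>{1..n}. A i x = 0}"

lemma W_eq: "(\<Inter>i\<in>{1..n}. {x. cadjoint (V i) x = 0}) = W"
  by (auto simp: W_def A_def)

lemma W_sub: "csubspace W"
  unfolding csubspace_def W_def by (auto simp: A0 Aadd Asc)

lemma W_fd: "W \<subseteq> T ` W \<and> (\<exists>m>0. \<forall>w\<in>W. m * norm w \<le> norm (T w))"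
proof (rule fd_main[OF W_sub _ T])
  show "cfinite_dim W" using fin by (simp only: W_eq)
  show "T ` W \<subseteq> W" by (auto simp: W_def TinvA)
  show "\<forall>x\<in>W. T x = 0 \<longrightarrow> x = 0" using inj by (simp only: W_eq)
qed

definition m0 :: real where "m0 = (SOME m. m > 0 \<and> (\<forall>w\<in>W. m * norm w \<le> norm (T w)))"

lemma m0: "m0 > 0" "w \<in> W \<Longrightarrow> m0 * norm w \<le> norm (T w)"
proof -
  have "\<exists>m. m > 0 \<and> (\<forall>w\<in>W. m * norm w \<le> norm (T w))" using W_fd by blast
  from someI_ex[OF this] show "m0 > 0" "w \<in> W \<Longrightarrow> m0 * norm w \<le> norm (T w)"
    unfolding m0_def by blast+
qed

lemma bb_aux:
  assumes "\<forall>i\<in>{1..n}. (A i ^^ N i) y = 0"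
  shows "m0 * norm y \<le> norm (T y)"
  using assms
proof (induction "sum N {1..n}" arbitrary: N y rule: less_induct)
  case less
  show ?case
  proof (cases "\<forall>i\<in>{1..n}. N i \<le> 1")
    case True
    have "y \<in> W" unfolding W_def
    proof (intro CollectI ballI)
      fix i assume i: "i \<in> {1..n}"
      show "A i y = 0"
      proof (cases "N i = 0")
        case True
        have "(A i ^^ N i) y = 0" using less.prems i by blast
        then show ?thesis using True by (simp add: A0[OF i])
      next
        case False then have "N i = 1" using True i by force
        moreover have "(A i ^^ N i) y = 0" using less.prems i by blast
        ultimately show ?thesis by simp
      qed
    qed
    then show ?thesis by (rule m0(2))
  next
    case False
    then obtain i where i: "i \<in> {1..n}" and Ni: "N i \<ge> 2" by force
    define e where "e = y - V i (A i y)"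
    define a where "a = A i y"
    define N1 where "N1 = N(i := 1)"
    define N2 where "N2 = N(i := N i - 1)"
    have ie: "\<forall>j\<in>{1..n}. (A j ^^ N1 j) e = 0"
    proof
      fix j assume j: "j \<in> {1..n}"
      show "(A j ^^ N1 j) e = 0"
      proof (cases "j = i")
        case True then show ?thesis by (simp add: N1_def e_def Adiff[OF i] AV[OF i])
      next
        case False
        then have "(A j ^^ N j) (A i y) = 0"
          using AApow[OF i j False[symmetric], of "N j" y] less.prems j by (simp add: A0[OF i])
        then show ?thesis using False less.prems j
          by (simp add: N1_def e_def Apow_diff[OF j] AVpow[OF i j False[symmetric]] V0[OF i])
      qed
    qed
    have ia: "\<forall>j\<in>{1..n}. (A j ^^ N2 j) a = 0"
    proof
      fix j assume j: "j \<in> {1..n}"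
      show "(A j ^^ N2 j) a = 0"
      proof (cases "j = i")
        case True
        have "N i = Suc (N i - 1)" using Ni by simp
        then have "(A i ^^ N i) y = (A i ^^ (N i - 1)) (A i y)"
          by (metis funpow_Suc_right o_apply)
        then show ?thesis using True less.prems i by (simp add: N2_def a_def)
      next
        case False
        then show ?thesis
          using AApow[OF i j False[symmetric], of "N j" y] less.prems j by (simp add: A0[OF i] N2_def a_def)
      qed
    qed
    have fin: "finite {1..n}" by simp
    have s1: "sum N1 {1..n} < sum N {1..n}"
      by (rule sum_strict_mono_ex1[OF fin]) (use i Ni in \<open>auto simp: N1_def\<close>)
    have s2: "sum N2 {1..n} < sum N {1..n}"
      by (rule sum_strict_mono_ex1[OF fin]) (use i Ni in \<open>auto simp: N2_def\<close>)
    have he: "m0 * norm e \<le> norm (T e)" using less.hyps[OF s1 ie] .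
    have ha: "m0 * norm a \<le> norm (T a)" using less.hyps[OF s2 ia] .
    have dy: "(norm y)\<^sup>2 = (norm e)\<^sup>2 + (norm a)\<^sup>2"
      using decomp[OF i, of y] by (simp only: e_def a_def)
    have "(m0 * norm y)\<^sup>2 = m0\<^sup>2 * ((norm e)\<^sup>2 + (norm a)\<^sup>2)"
      by (simp only: power_mult_distrib dy)
    also have "\<dots> = (m0 * norm e)\<^sup>2 + (m0 * norm a)\<^sup>2" by (simp add: algebra_simps power_mult_distrib)
    also have "\<dots> \<le> (norm (T e))\<^sup>2 + (norm (T a))\<^sup>2"
      using he ha m0(1) by (intro add_mono power_mono) auto
    also have "\<dots> = (norm (T y))\<^sup>2"
    proof -
      have dT: "(norm (T y))\<^sup>2 = (norm (T y - V i (A i (T y))))\<^sup>2 + (norm (A i (T y)))\<^sup>2"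
        by (rule decomp[OF i])
      have "T y - V i (A i (T y)) = T e" unfolding e_def by (rule TE[OF i])
      moreover have "norm (A i (T y)) = norm (T a)" using tau(1)[OF i] by (simp add: TA[OF i] a_def)
      ultimately show ?thesis using dT by simp
    qed
    finally show ?thesis by (rule power2_le_imp_le) simp
  qed
qed

end


context dnc_setting begin

inductive_set G :: "'h set" where
  Gw: "x \<in> W \<Longrightarrow> x \<in> G"
| GV: "x \<in> G \<Longrightarrow> i \<in> {1..n} \<Longrightarrow> V i x \<in> G"
| Gadd: "x \<in> G \<Longrightarrow> y \<in> G \<Longrightarrow> x + y \<in> G"
| Gsc: "x \<in> G \<Longrightarrow> scaleC c x \<in> G"

lemma W0: "0 \<in> W" using W_sub by (simp add: csubspace_def)
lemma G0: "0 \<in> G" by (rule Gw[OF W0])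

lemma G_A: "x \<in> G \<Longrightarrow> j \<in> {1..n} \<Longrightarrow> A j x \<in> G"
proof (induction rule: G.induct)
  case (Gw x)
  then have "A j x = 0" by (simp add: W_def)
  then show ?case using G0 by simp
next
  case (GV x i)
  show ?case
  proof (cases "i = j")
    case True then show ?thesis using GV by (simp add: AV)
  next
    case False
    then show ?thesis using GV by (simp add: dncA G.GV G.Gsc)
  qed
next
  case (Gadd x y) then show ?case by (simp add: Aadd G.Gadd)
next
  case (Gsc x c) then show ?case by (simp add: Asc G.Gsc)
qed

lemma Apow_mono: "j \<in> {1..n} \<Longrightarrow> (A j ^^ N) x = 0 \<Longrightarrow> N \<le> M \<Longrightarrow> (A j ^^ M) x = 0"
proof -
  assume j: "j \<in> {1..n}" and h: "(A j ^^ N) x = 0" and NM: "N \<le> M"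
  have "(A j ^^ M) x = (A j ^^ (M - N)) ((A j ^^ N) x)"
    using NM by (metis funpow_add le_add_diff_inverse2 o_apply)
  then show ?thesis using h Apow_zero[OF j] by simp
qed

lemma G_nil: "x \<in> G \<Longrightarrow> \<exists>N. \<forall>j\<in>{1..n}. (A j ^^ N) x = 0"
proof (induction rule: G.induct)
  case (Gw x)
  then show ?case by (intro exI[of _ 1]) (simp add: W_def)
next
  case (GV x i)
  then obtain N where N: "\<forall>j\<in>{1..n}. (A j ^^ N) x = 0" by blast
  have "(A j ^^ Suc N) (V i x) = 0" if j: "j \<in> {1..n}" for j
  proof (cases "j = i")
    case True
    have "(A i ^^ Suc N) (V i x) = (A i ^^ N) (A i (V i x))" by (metis funpow_Suc_right o_apply)
    then show ?thesis using True N j GV.hyps(2) by (simp add: AV)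
  next
    case False
    have "(A j ^^ Suc N) x = 0" using N j by (simp add: A0)
    then show ?thesis using AVpow[OF GV.hyps(2) j False[symmetric], of "Suc N" x]
      by (simp add: V0[OF GV.hyps(2)])
  qed
  then show ?case by blast
next
  case (Gadd x y)
  then obtain N1 N2 where N1: "\<forall>j\<in>{1..n}. (A j ^^ N1) x = 0" and N2: "\<forall>j\<in>{1..n}. (A j ^^ N2) y = 0"
    by blast
  have "(A j ^^ max N1 N2) (x + y) = 0" if j: "j \<in> {1..n}" for j
    using Apow_mono[OF j, of N1 x "max N1 N2"] Apow_mono[OF j, of N2 y "max N1 N2"] N1 N2 j
    by (simp add: Apow_add[OF j])
  then show ?case by blast
next
  case (Gsc x c)
  then obtain N where N: "\<forall>j\<in>{1..n}. (A j ^^ N) x = 0" by blast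
  then have "\<forall>j\<in>{1..n}. (A j ^^ N) (scaleC c x) = 0" by (simp add: Apow_sc)
  then show ?case by blast
qed

lemma bb_G: "x \<in> G \<Longrightarrow> m0 * norm x \<le> norm (T x)"
proof -
  assume "x \<in> G"
  then obtain N where "\<forall>j\<in>{1..n}. (A j ^^ N) x = 0" using G_nil by blast
  then show ?thesis using bb_aux[of "\<lambda>_. N" x] by simp
qed

definition Mo :: "'h set" where "Mo = {y. \<forall>u\<in>G. cinner y u = 0}"
definition K :: "nat \<Rightarrow> 'h set" where "K j = {y \<in> Mo. \<forall>i\<in>{1..n}. j < i \<longrightarrow> A i y = 0}"

lemma Mo_V: assumes y: "y \<in> Mo" and i: "i \<in> {1..n}" shows "V i y \<in> Mo"
  unfolding Mo_def
proof (intro CollectI ballI)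
  fix u assume u: "u \<in> G"
  have "A i u \<in> G" by (rule G_A[OF u i])
  then have "cinner y (A i u) = 0" using y by (simp add: Mo_def)
  then show "cinner (V i y) u = 0" by (simp only: adj[OF i])
qed

lemma Mo_A: assumes y: "y \<in> Mo" and i: "i \<in> {1..n}" shows "A i y \<in> Mo"
  unfolding Mo_def
proof (intro CollectI ballI)
  fix u assume u: "u \<in> G"
  have "V i u \<in> G" by (rule GV[OF u i])
  then have "cinner y (V i u) = 0" using y by (simp add: Mo_def)
  then show "cinner (A i y) u = 0" by (simp only: adj2[OF i])
qed

lemma Mo_sub: "csubspace Mo"
  unfolding csubspace_def Mo_def
  by (auto simp: cinner_add_left cinner_scaleC_left)

lemma Mo_closed: "closed Mo"
  unfolding Mo_def by (rule closed_orth)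

lemma ker_closed: assumes i: "i \<in> {1..n}" shows "closed {y. A i y = 0}"
proof -
  have eq: "{y. A i y = 0} = {y. \<forall>u\<in>range (V i). cinner y u = 0}" using kerA[OF i] by auto
  show ?thesis unfolding eq by (rule closed_orth)
qed

lemma K_zero: "j \<le> n \<Longrightarrow> K j = {0}"
proof (induction j)
  case 0
  have "y = 0" if y: "y \<in> K 0" for y
  proof -
    have "y \<in> W" using y by (auto simp: K_def W_def)
    then have "y \<in> G" by (rule Gw)
    then have "cinner y y = 0" using y by (simp add: K_def Mo_def)
    then show ?thesis by simp
  qed
  moreover have "0 \<in> K 0" by (simp add: K_def Mo_def A0)
  ultimately show ?case by blast
next
  case (Suc j)
  define k where "k = Suc j"
  have k: "k \<in> {1..n}" using Suc.prems by (simp add: k_def)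
  have IH: "K j = {0}" using Suc by simp
  have sub: "csubspace (K k)"
    using Mo_sub unfolding csubspace_def K_def by (auto simp: A0 Aadd Asc)
  have "K k = Mo \<inter> (\<Inter>i\<in>{i\<in>{1..n}. k < i}. {y. A i y = 0})"
    by (auto simp: K_def)
  moreover have "closed (\<Inter>i\<in>{i\<in>{1..n}. k < i}. {y. A i y = 0})"
    by (intro closed_INT ballI ker_closed) auto
  ultimately have cl: "closed (K k)" using Mo_closed by (simp add: closed_Int)
  have VK: "V k ` K k = K k"
  proof
    show "V k ` K k \<subseteq> K k"
    proof
      fix x assume "x \<in> V k ` K k"
      then obtain y where y: "y \<in> K k" and x: "x = V k y" by blast
      have "x \<in> Mo" using y k Mo_V by (simp add: x K_def)
      moreover have "A i x = 0" if i: "i \<in> {1..n}" "k < i" for i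
        using y i k kerAV[of i k y] by (simp add: x K_def)
      ultimately show "x \<in> K k" by (simp add: K_def)
    qed
    show "K k \<subseteq> V k ` K k"
    proof
      fix y assume y: "y \<in> K k"
      define a where "a = A k y"
      have aK: "a \<in> K k"
      proof -
        have "a \<in> Mo" using y k Mo_A by (simp add: a_def K_def)
        moreover have "A i a = 0" if i: "i \<in> {1..n}" "k < i" for i
          using y i k kerAA[of i k y] by (simp add: a_def K_def)
        ultimately show ?thesis by (simp add: K_def)
      qed
      define e where "e = y - V k a"
      have "V k a \<in> K k" using aK \<open>V k ` K k \<subseteq> K k\<close> by blast
      then have eK: "e \<in> K k" using sub y by (simp add: e_def csubspace_eq cvs.subspace_diff)
      have Ae: "A k e = 0" by (simp add: e_def a_def Adiff[OF k] AV[OF k])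
      have "e \<in> K j" unfolding K_def
      proof (intro CollectI conjI ballI impI)
        show "e \<in> Mo" using eK by (simp add: K_def)
        fix i assume i: "i \<in> {1..n}" "j < i"
        show "A i e = 0"
        proof (cases "i = k")
          case True then show ?thesis using Ae by simp
        next
          case False
          then have "k < i" using i by (simp add: k_def)
          then show ?thesis using eK i by (simp add: K_def)
        qed
      qed
      then have "e = 0" using IH by simp
      then have "y = V k a" by (simp add: e_def)
      then show "y \<in> V k ` K k" using aK by blast
    qed
  qed
  have "pure_isometry (V k)" using pure k by blast
  then have "K k = {0}" using sub cl VK by (simp add: pure_isometry_def)
  then show ?case by (simp add: k_def)
qed

lemma Mo_zero: "Mo = {0}"
proof -
  have "K n = Mo" by (auto simp: K_def)
  then show ?thesis using K_zero[of n] by simp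
qed

lemma G_sub: "csubspace G"
  by (simp add: csubspace_def G0 Gadd Gsc)

lemma closure_sub: "csubspace (closure G)"
  unfolding csubspace_def
proof (intro conjI ballI allI)
  show "0 \<in> closure G" using G0 closure_subset by blast
  show "x + y \<in> closure G" if xy: "x \<in> closure G" "y \<in> closure G" for x y
  proof -
    obtain f where f: "\<forall>n. f n \<in> G" "f \<longlonglongrightarrow> x" using xy(1) unfolding closure_sequential by blast
    obtain g where g: "\<forall>n. g n \<in> G" "g \<longlonglongrightarrow> y" using xy(2) unfolding closure_sequential by blast
    have "(\<lambda>k. f k + g k) \<longlonglongrightarrow> x + y" by (intro tendsto_add f(2) g(2))
    moreover have "\<forall>k. f k + g k \<in> G" using f(1) g(1) Gadd by blast
    ultimately show ?thesis unfolding closure_sequential by (intro exI[of _ "\<lambda>k. f k + g k"] conjI)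
  qed
  show "scaleC c x \<in> closure G" if xr: "x \<in> closure G" for c x
  proof -
    obtain f where f: "\<forall>n. f n \<in> G" "f \<longlonglongrightarrow> x" using xr unfolding closure_sequential by blast
    have "(\<lambda>k. scaleC c (f k)) \<longlonglongrightarrow> scaleC c x"
      by (rule bounded_linear.tendsto[OF bounded_linear_scaleC f(2)])
    moreover have "\<forall>k. scaleC c (f k) \<in> G" using f(1) Gsc by blast
    ultimately show ?thesis unfolding closure_sequential by (intro exI[of _ "\<lambda>k. scaleC c (f k)"] conjI)
  qed
qed

lemma closure_G: "closure G = UNIV"
proof -
  have "x \<in> closure G" for x
  proof -
    obtain p where p: "p \<in> closure G" "\<forall>u\<in>closure G. cinner (x - p) u = 0"
      using proj_exists[OF closure_sub closed_closure] by blast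
    then have "x - p \<in> Mo" using closure_subset by (auto simp: Mo_def)
    then have "x = p" using Mo_zero by simp
    then show ?thesis using p by simp
  qed
  then show ?thesis by blast
qed

lemma G_range: "x \<in> G \<Longrightarrow> x \<in> range T"
proof (induction rule: G.induct)
  case (Gw x) then show ?case using W_fd by blast
next
  case (GV x i)
  then obtain y where y: "x = T y" by blast
  have t0: "tau i \<noteq> 0" using tau(1)[OF GV.hyps(2)] by auto
  have "T (V i (scaleC (inverse (tau i)) y)) = scaleC (tau i * inverse (tau i)) (V i x)"
    by (simp add: tau(2)[OF GV.hyps(2)] Tsc Vsc[OF GV.hyps(2)] y)
  also have "\<dots> = V i x" using t0 by simp
  finally show ?case by (metis rangeI)
next
  case (Gadd x y)
  then obtain a b where "x = T a" "y = T b" by blast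
  then have "x + y = T (a + b)" by (simp add: Tadd)
  then show ?case by simp
next
  case (Gsc x c)
  then obtain a where "x = T a" by blast
  then have "scaleC c x = T (scaleC c a)" by (simp add: Tsc)
  then show ?case by simp
qed

lemma bb_all: "m0 * norm x \<le> norm (T x)"
proof -
  have "x \<in> closure G" using closure_G by simp
  then obtain g where g: "\<forall>k. g k \<in> G" "g \<longlonglongrightarrow> x" unfolding closure_sequential by blast
  show ?thesis
  proof (rule LIMSEQ_le)
    show "(\<lambda>k. m0 * norm (g k)) \<longlonglongrightarrow> m0 * norm x" by (intro tendsto_intros g(2))
    show "(\<lambda>k. norm (T (g k))) \<longlonglongrightarrow> norm (T x)" by (intro tendsto_intros bcl_tendsto[OF T g(2)])
    show "\<exists>N. \<forall>k\<ge>N. m0 * norm (g k) \<le> norm (T (g k))" using g(1) bb_G by blast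
  qed
qed

lemma range_closed: "closed (range T)"
  unfolding closed_sequential_limits
proof (intro allI impI, elim conjE)
  fix y l assume yr: "\<forall>n. y n \<in> range T" and yl: "y \<longlonglongrightarrow> l"
  have "\<forall>n. \<exists>a. y n = T a" using yr by blast
  then obtain x where x: "\<And>k. y k = T (x k)" by metis
  have "Cauchy y" using yl by (rule LIMSEQ_imp_Cauchy)
  have "Cauchy x"
  proof (rule metric_CauchyI)
    fix e :: real assume e: "e > 0"
    then have "m0 * e > 0" using m0(1) by simp
    then obtain N where N: "\<forall>k\<ge>N. \<forall>l\<ge>N. dist (y k) (y l) < m0 * e"
      using \<open>Cauchy y\<close> unfolding Cauchy_def by blast
    have "dist (x k) (x l) < e" if "k \<ge> N" "l \<ge> N" for k l
    proof -
      have "m0 * dist (x k) (x l) \<le> norm (T (x k - x l))" using bb_all by (simp add: dist_norm)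
      also have "\<dots> = dist (y k) (y l)" by (simp add: x Tdiff dist_norm)
      also have "\<dots> < m0 * e" using N that by blast
      finally show ?thesis using m0(1) by simp
    qed
    then show "\<exists>N. \<forall>k\<ge>N. \<forall>l\<ge>N. dist (x k) (x l) < e" by blast
  qed
  then obtain p where xp: "x \<longlonglongrightarrow> p" using Cauchy_convergent_iff convergent_def by blast
  have "(\<lambda>k. T (x k)) \<longlonglongrightarrow> T p" by (rule bcl_tendsto[OF T xp])
  then have "y \<longlonglongrightarrow> T p" by (simp add: x[abs_def])
  then have "l = T p" using yl LIMSEQ_unique by blast
  then show "l \<in> range T" by simp
qed

lemma main: "range T = UNIV"
proof -
  have "G \<subseteq> range T" using G_range by blast
  then have "closure G \<subseteq> closure (range T)" by (rule closure_mono)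
  then show ?thesis using closure_G closure_closed[OF range_closed] by auto
qed

end

theorem lemma3p11:
  fixes n :: nat
    and z :: "nat \<Rightarrow> nat \<Rightarrow> complex"
    and V :: "nat \<Rightarrow> 'h::{cinner_space, complete_space} \<Rightarrow> 'h"
    and T :: "'h \<Rightarrow> 'h"
  assumes n: "n \<ge> 1"
    and z_unimod: "\<forall>i\<in>{1..n}. \<forall>j\<in>{1..n}. i \<noteq> j \<longrightarrow> norm (z i j) = 1"
    and z_sym: "\<forall>i\<in>{1..n}. \<forall>j\<in>{1..n}. i \<noteq> j \<longrightarrow> z j i = cnj (z i j)"
    and dnc: "doubly_noncommuting n z V"
    and pure: "\<forall>i\<in>{1..n}. pure_isometry (V i)"
    and fin: "cfinite_dim (\<Inter>i\<in>{1..n}. {x. cadjoint (V i) x = 0})"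
    and T: "bounded_clinear T"
    and comm: "\<forall>i\<in>{1..n}. \<exists>\<tau>. norm \<tau> = 1 \<and> (\<forall>x. T (V i x) = scaleC \<tau> (V i (T x)))"
    and inv: "\<forall>i\<in>{1..n}. T ` {x. cadjoint (V i) x = 0} \<subseteq> {x. cadjoint (V i) x = 0}"
    and inj: "\<forall>x\<in>(\<Inter>i\<in>{1..n}. {x. cadjoint (V i) x = 0}). T x = 0 \<longrightarrow> x = 0"
  shows "range T = UNIV"
proof -
  interpret dnc_setting n z V T
    by (rule dnc_setting.intro) (fact assms)+
  show ?thesis by (rule main)
qed


end
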